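(* Let $X$ be a reflexive complex Banach space, let $A$ be a positive self-adjoint operator from $X$ to $X^\ast$, and let $E$ be a bounded linear operator on $X$ such that $E(\operatorname{dom}A)\subseteq\operatorname{dom}A$ and $E^\ast A\subseteq AE$. Let $\hat E$ denote the bounded operator on $H_A$ obtained by continuous extension of the bounded operator $Ax\mapsto AEx$ on $\operatorname{ran}A$. Then $\hat E$ is a self-adjoint operator on the Hilbert space $H_A$.
   Context: $X^\ast$ denotes the conjugate dual of $X$ (continuous conjugate-linear functionals on $X$); $X$ is identified with $X^{\ast\ast}$. For $v\in X^\ast$, $x\in X$ write $(v,x):=v(x)$ and $(x,v):=\overline{v(x)}$. An operator $A$ from $X$ to $X^\ast$ is positive if $(Ax,x)\ge0$ for all $x\in\operatorname{dom}A$; its adjoint $A^\ast$ has domain $\{y\in X:x\mapsto(Ax,y)\text{ continuous on }\operatorname{dom}A\}$ and is determined by $(x,A^\ast y)=(Ax,y)$; $A$ is self-adjoint if $A=A^\ast$. For a bounded operator $E$ on $X$, $E^\ast$ is the bounded operator on $X^\ast$ with $(E^\ast v,x)=(v,Ex)$. $H_A$ is the completion of $\operatorname{ran}A$ with respect to the inner product $[Ax,Ay]_A:=(Ax,y)$. Under the stated hypotheses, $Ax\mapsto AEx$ is a well-defined bounded linear operator on $\operatorname{ran}A$ with respect to the $H_A$-norm. *)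

theory Defs
  imports "HOL-Analysis.Analysis"
begin

definition complex_banach :: "(complex \<Rightarrow> 'x::banach \<Rightarrow> 'x) \<Rightarrow> bool" where
  "complex_banach sc \<longleftrightarrow> Vector_Spaces.vector_space sc
     \<and> (\<forall>r x. sc (complex_of_real r) x = r *\<^sub>R x)
     \<and> (\<forall>c x. norm (sc c x) = cmod c * norm x)"

definition conj_dual :: "(complex \<Rightarrow> 'x::real_normed_vector \<Rightarrow> 'x) \<Rightarrow> ('x \<Rightarrow> complex) set" where
  "conj_dual sc = {v. (\<forall>x y. v (x + y) = v x + v y)
                     \<and> (\<forall>c x. v (sc c x) = cnj c * v x)
                     \<and> (\<exists>K. \<forall>x. cmod (v x) \<le> K * norm x)}"

text \<open>Reflexivity: every continuous conjugate-linear functional on the dual is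
  of the form v \<mapsto> (x,v) = conj (v x) for some x (identification X = X**).\<close>
definition reflexive_space :: "(complex \<Rightarrow> 'x::real_normed_vector \<Rightarrow> 'x) \<Rightarrow> bool" where
  "reflexive_space sc \<longleftrightarrow>
     (\<forall>\<Phi> :: ('x \<Rightarrow> complex) \<Rightarrow> complex.
        (\<forall>v\<in>conj_dual sc. \<forall>w\<in>conj_dual sc. \<Phi> (\<lambda>x. v x + w x) = \<Phi> v + \<Phi> w)
        \<and> (\<forall>c. \<forall>v\<in>conj_dual sc. \<Phi> (\<lambda>x. c * v x) = cnj c * \<Phi> v)
        \<and> (\<exists>K. \<forall>v\<in>conj_dual sc. cmod (\<Phi> v) \<le> K * onorm v)
      \<longrightarrow> (\<exists>x. \<forall>v\<in>conj_dual sc. \<Phi> v = cnj (v x)))"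

definition dual_operator ::
  "(complex \<Rightarrow> 'x::real_normed_vector \<Rightarrow> 'x) \<Rightarrow> 'x set \<Rightarrow> ('x \<Rightarrow> 'x \<Rightarrow> complex) \<Rightarrow> bool" where
  "dual_operator sc D A \<longleftrightarrow>
     0 \<in> D \<and> (\<forall>x\<in>D. \<forall>y\<in>D. x + y \<in> D) \<and> (\<forall>c. \<forall>x\<in>D. sc c x \<in> D)
     \<and> (\<forall>x\<in>D. A x \<in> conj_dual sc)
     \<and> (\<forall>x\<in>D. \<forall>y\<in>D. A (x + y) = (\<lambda>z. A x z + A y z))
     \<and> (\<forall>c. \<forall>x\<in>D. A (sc c x) = (\<lambda>z. c * A x z))"

definition positive_op :: "'x set \<Rightarrow> ('x \<Rightarrow> 'x \<Rightarrow> complex) \<Rightarrow> bool" where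
  "positive_op D A \<longleftrightarrow> (\<forall>x\<in>D. A x x \<in> \<real> \<and> 0 \<le> Re (A x x))"

definition adjoint_dom :: "'x::real_normed_vector set \<Rightarrow> ('x \<Rightarrow> 'x \<Rightarrow> complex) \<Rightarrow> 'x set" where
  "adjoint_dom D A = {y. continuous_on D (\<lambda>x. A x y)}"

text \<open>Self-adjointness A = A*: A is densely defined (so that A*y is determined
  by (x,A*y) = (Ax,y)), dom A* = dom A and (x,Ay) = (Ax,y) for x,y in dom A,
  where (x,Ay) = conj ((Ay) x).\<close>
definition selfadjoint_op :: "'x::real_normed_vector set \<Rightarrow> ('x \<Rightarrow> 'x \<Rightarrow> complex) \<Rightarrow> bool" where
  "selfadjoint_op D A \<longleftrightarrow> closure D = UNIV \<and> adjoint_dom D A = D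
     \<and> (\<forall>x\<in>D. \<forall>y\<in>D. cnj (A y x) = A x y)"

definition complex_hilbert :: "(complex \<Rightarrow> 'h::banach \<Rightarrow> 'h) \<Rightarrow> ('h \<Rightarrow> 'h \<Rightarrow> complex) \<Rightarrow> bool" where
  "complex_hilbert sc ip \<longleftrightarrow> complex_banach sc
     \<and> (\<forall>x y z. ip (x + y) z = ip x z + ip y z)
     \<and> (\<forall>c x y. ip (sc c x) y = c * ip x y)
     \<and> (\<forall>x y. ip y x = cnj (ip x y))
     \<and> (\<forall>x. ip x x \<in> \<real> \<and> 0 \<le> Re (ip x x))
     \<and> (\<forall>x. norm x = sqrt (Re (ip x x)))"

definition hilbert_selfadjoint :: "('h \<Rightarrow> 'h \<Rightarrow> complex) \<Rightarrow> ('h \<Rightarrow> 'h) \<Rightarrow> bool" where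
  "hilbert_selfadjoint ip T \<longleftrightarrow> (\<forall>h k. ip (T h) k = ip h (T k))"

end

theory Submission
  imports Defs
begin

lemma ip_facts:
  assumes H: "complex_hilbert sch ip"
  shows "\<And>x y. Re (ip x y) = ((norm (x+y))^2 - (norm (x-y))^2)/4"
    and "\<And>x y. Im (ip x y) = Re (ip x (sch \<i> y))"
proof -
  have cb: "complex_banach sch" and add1: "\<forall>x y z. ip (x + y) z = ip x z + ip y z"
    and sc1: "\<forall>c x y. ip (sch c x) y = c * ip x y"
    and sym: "\<forall>x y. ip y x = cnj (ip x y)"
    and nrm: "\<forall>x. norm x = sqrt (Re (ip x x))"
    and pos: "\<forall>x. ip x x \<in> \<real> \<and> 0 \<le> Re (ip x x)"
    using H unfolding complex_hilbert_def by blast+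
  have rs: "\<forall>r x. sch (complex_of_real r) x = r *\<^sub>R x" using cb unfolding complex_banach_def by auto
  have neg1: "ip (- x) y = - ip x y" for x y
  proof -
    have "- x = sch (complex_of_real (-1)) x" using rs[rule_format, of "-1" x] by simp
    moreover have "ip (sch (complex_of_real (-1)) x) y = complex_of_real (-1) * ip x y" using sc1 by blast
    ultimately show ?thesis by simp
  qed
  have sub1: "ip (x - y) z = ip x z - ip y z" for x y z
  proof -
    have "ip (x + - y) z = ip x z + ip (- y) z" using add1 by blast
    then show ?thesis using neg1[of y z] by simp
  qed
  have add2: "ip x (y + z) = ip x y + ip x z" for x y z
  proof -
    have "ip x (y + z) = cnj (ip (y + z) x)" using sym by blast
    moreover have "ip (y + z) x = ip y x + ip z x" using add1 by blast
    moreover have "ip x y = cnj (ip y x)" "ip x z = cnj (ip z x)" using sym by blast+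
    ultimately show ?thesis by simp
  qed
  have sub2: "ip x (y - z) = ip x y - ip x z" for x y z
  proof -
    have "ip x (y - z) = cnj (ip (y - z) x)" using sym by blast
    moreover have "ip x y = cnj (ip y x)" "ip x z = cnj (ip z x)" using sym by blast+
    ultimately show ?thesis using sub1[of y z x] by simp
  qed
  have nsq: "(norm x)^2 = Re (ip x x)" for x
  proof -
    have "norm x = sqrt (Re (ip x x))" "0 \<le> Re (ip x x)" using nrm pos by blast+
    then show ?thesis by simp
  qed
  show "Re (ip x y) = ((norm (x+y))^2 - (norm (x-y))^2)/4" for x y
  proof -
    have "(norm (x+y))^2 - (norm (x-y))^2 = 2 * Re (ip x y) + 2 * Re (ip y x)"
      unfolding nsq add1[rule_format] add2 sub1 sub2 by simp
    moreover have "ip y x = cnj (ip x y)" using sym by blast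
    ultimately show ?thesis by simp
  qed
  show "Im (ip x y) = Re (ip x (sch \<i> y))" for x y
  proof -
    have "ip x (sch \<i> y) = cnj (ip (sch \<i> y) x)" using sym by blast
    moreover have "ip (sch \<i> y) x = \<i> * ip y x" using sc1 by blast
    moreover have "ip y x = cnj (ip x y)" using sym by blast
    ultimately show ?thesis by simp
  qed
qed

lemma ip_cont:
  assumes H: "complex_hilbert sch ip"
  shows "continuous_on UNIV (\<lambda>h. ip h k)" "continuous_on UNIV (\<lambda>h. ip k h)"
proof -
  have sym: "\<forall>x y. ip y x = cnj (ip x y)" using H unfolding complex_hilbert_def by blast
  have eq: "ip h k = complex_of_real (((norm (h+k))^2 - (norm (h-k))^2)/4)
     + \<i> * complex_of_real (((norm (h + sch \<i> k))^2 - (norm (h - sch \<i> k))^2)/4)" for h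
    using ip_facts[OF H] by (simp add: complex_eq_iff)
  show c1: "continuous_on UNIV (\<lambda>h. ip h k)"
    unfolding eq by (intro continuous_intros) auto
  show "continuous_on UNIV (\<lambda>h. ip k h)"
  proof -
    have "(\<lambda>h. ip k h) = (\<lambda>h. cnj (ip h k))" using sym by blast
    then show ?thesis using c1 by (simp add: continuous_on_cnj)
  qed
qed

theorem lemma5:
  fixes sc :: "complex \<Rightarrow> 'x::banach \<Rightarrow> 'x"
    and D :: "'x set" and A :: "'x \<Rightarrow> 'x \<Rightarrow> complex" and E :: "'x \<Rightarrow> 'x"
    and sch :: "complex \<Rightarrow> 'h::banach \<Rightarrow> 'h" and ip :: "'h \<Rightarrow> 'h \<Rightarrow> complex"
    and J :: "('x \<Rightarrow> complex) \<Rightarrow> 'h" and Ehat :: "'h \<Rightarrow> 'h"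
  assumes X: "complex_banach sc" and refl: "reflexive_space sc"
    and Aop: "dual_operator sc D A" and Apos: "positive_op D A" and Asa: "selfadjoint_op D A"
    and Ebd: "bounded_linear E" and Elin: "\<forall>c x. E (sc c x) = sc c (E x)"
    and Edom: "E ` D \<subseteq> D"
    and EA: "\<forall>x\<in>D. (\<lambda>z. A x (E z)) = A (E x)"
    and H: "complex_hilbert sch ip"
    and Jadd: "\<forall>x\<in>D. \<forall>y\<in>D. J (A (x + y)) = J (A x) + J (A y)"
    and Jscale: "\<forall>c. \<forall>x\<in>D. J (A (sc c x)) = sch c (J (A x))"
    and Jip: "\<forall>x\<in>D. \<forall>y\<in>D. ip (J (A x)) (J (A y)) = A x y"
    and Jdense: "closure (J ` A ` D) = UNIV"
    and Ehat_bd: "bounded_linear Ehat" and Ehat_lin: "\<forall>c h. Ehat (sch c h) = sch c (Ehat h)"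
    and Ehat_ext: "\<forall>x\<in>D. Ehat (J (A x)) = J (A (E x))"
  shows "hilbert_selfadjoint ip Ehat"
proof -
  have cE: "continuous_on UNIV Ehat" using Ehat_bd linear_continuous_on by blast
  have base: "ip (Ehat (J (A x))) (J (A y)) = ip (J (A x)) (Ehat (J (A y)))" if "x \<in> D" "y \<in> D" for x y
  proof -
    have "E x \<in> D" "E y \<in> D" using Edom that by auto
    then have "ip (Ehat (J (A x))) (J (A y)) = A (E x) y" using Ehat_ext Jip that by simp
    also have "\<dots> = A x (E y)" using EA that by metis
    also have "\<dots> = ip (J (A x)) (Ehat (J (A y)))" using Ehat_ext Jip that \<open>E y \<in> D\<close> by simp
    finally show ?thesis .
  qed
  let ?S = "J ` A ` D"
  have clo: "closed {h. ip (Ehat h) k - ip h (Ehat k) = 0}" for k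
  proof -
    have "continuous_on UNIV (\<lambda>h. ip (Ehat h) k - ip h (Ehat k))"
      by (intro continuous_intros continuous_on_compose2[OF ip_cont(1)[OF H] cE] ip_cont(1)[OF H]) auto
    from continuous_closed_preimage_constant[OF this closed_UNIV, of 0] show ?thesis by simp
  qed
  have clo2: "closed {k. ip (Ehat h) k - ip h (Ehat k) = 0}" for h
  proof -
    have "continuous_on UNIV (\<lambda>k. ip (Ehat h) k - ip h (Ehat k))"
      by (intro continuous_intros continuous_on_compose2[OF ip_cont(2)[OF H] cE] ip_cont(2)[OF H]) auto
    from continuous_closed_preimage_constant[OF this closed_UNIV, of 0] show ?thesis by simp
  qed
  have step1: "ip (Ehat h) k = ip h (Ehat k)" if "k \<in> ?S" for h k
  proof -
    have "?S \<subseteq> {h. ip (Ehat h) k - ip h (Ehat k) = 0}" using that base by auto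
    then have "closure ?S \<subseteq> {h. ip (Ehat h) k - ip h (Ehat k) = 0}"
      using clo closure_minimal by blast
    then show ?thesis using Jdense by auto
  qed
  have "ip (Ehat h) k = ip h (Ehat k)" for h k
  proof -
    have "?S \<subseteq> {k. ip (Ehat h) k - ip h (Ehat k) = 0}" using step1 by auto
    then have "closure ?S \<subseteq> {k. ip (Ehat h) k - ip h (Ehat k) = 0}"
      using clo2 closure_minimal by blast
    then show ?thesis using Jdense by auto
  qed
  then show ?thesis unfolding hilbert_selfadjoint_def by blast
qed

end
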